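(* Let $\boldsymbol{R}=[r_{ij}]\in\mathbb{C}^{N\times N}$ be Hermitian. Define $\delta_1=0$ and $\delta_k=\sum_{i=1}^{k-1}|r_{ki}|$ for $k=2,\ldots,N$. Define $a_k=2\delta_k+4\sum_{i=1}^{N-k}\delta_{k+i}$ for $k=1,\ldots,N-1$ and $a_N=2\delta_N$. Let $\overline{\boldsymbol{R}}$ be the matrix obtained from $\boldsymbol{R}$ by replacing its diagonal entries with $a_1,\ldots,a_N$, i.e. $\overline{\boldsymbol{R}}=\boldsymbol{R}-\mathrm{Diag}(\boldsymbol{R})+\mathrm{diag}(a_1,\ldots,a_N)$. For $1\le k\le N$ let $\overline{\boldsymbol{R}}_k$ be the principal submatrix of $\overline{\boldsymbol{R}}$ formed by its first $k$ rows and first $k$ columns, and define $F:A^*\to\mathbb{R}$ by $F(A)=A^H\overline{\boldsymbol{R}}_kA$ for $A=(s_1,\ldots,s_k)\in A^*$ (viewed as a column vector). Then for any $1\le k\le l\le N$ and any $b_1,\ldots,b_l\in\Omega$, with $B=(b_1,\ldots,b_k)$ and $A=(b_1,\ldots,b_l)$, \[ 4\sum_{i=k+1}^{l}\sum_{j=1}^{N-i}\delta_{i+j}\ \le\ F(A)-F(B)\ \le\ 4\sum_{i=k+1}^{l}\Big(\delta_i+\sum_{j=1}^{N-i}\delta_{i+j}\Big). \]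
   Context: $\Omega=\{x\in\mathbb{C}:|x|=1\}$. $A^*=\{(s_1,\ldots,s_k): s_i\in\Omega \text{ for } i=1,\ldots,k,\ k=1,\ldots,N\}$ is the set of all unimodular strings of length between $1$ and $N$. $\mathrm{Diag}(\boldsymbol{R})$ is the diagonal matrix with the same diagonal entries as $\boldsymbol{R}$, and $\mathrm{diag}(a_1,\ldots,a_N)$ is the diagonal matrix with diagonal entries $a_1,\ldots,a_N$. Empty sums are zero. *)

theory Defs
  imports "HOL-Analysis.Analysis"
begin

text \<open>Matrices of size N are represented as functions nat => nat => complex,
  indexed 1-based over 1..N.  Strings (s_1,...,s_k) are functions nat => complex
  with positions 1..k.\<close>

definition hermitian_mat :: "nat \<Rightarrow> (nat \<Rightarrow> nat \<Rightarrow> complex) \<Rightarrow> bool" where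
  "hermitian_mat N R \<longleftrightarrow> (\<forall>i\<in>{1..N}. \<forall>j\<in>{1..N}. R i j = cnj (R j i))"

definition delta :: "(nat \<Rightarrow> nat \<Rightarrow> complex) \<Rightarrow> nat \<Rightarrow> real" where
  "delta R k = (\<Sum>i=1..<k. cmod (R k i))"

definition acoef :: "nat \<Rightarrow> (nat \<Rightarrow> nat \<Rightarrow> complex) \<Rightarrow> nat \<Rightarrow> real" where
  "acoef N R k = 2 * delta R k + 4 * (\<Sum>i=1..N-k. delta R (k + i))"

definition Rbar :: "nat \<Rightarrow> (nat \<Rightarrow> nat \<Rightarrow> complex) \<Rightarrow> nat \<Rightarrow> nat \<Rightarrow> complex" where
  "Rbar N R i j = (if i = j then complex_of_real (acoef N R i) else R i j)"

text \<open>F(A) = A^H Rbar_k A for a string A = (s_1,...,s_k); this is real since Rbar is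
  Hermitian, and we take its real part (the imaginary part is 0).\<close>
definition Fval :: "nat \<Rightarrow> (nat \<Rightarrow> nat \<Rightarrow> complex) \<Rightarrow> nat \<Rightarrow> (nat \<Rightarrow> complex) \<Rightarrow> real" where
  "Fval N R k s = Re (\<Sum>i=1..k. \<Sum>j=1..k. cnj (s i) * Rbar N R i j * s j)"

end

theory Submission
  imports Defs
begin

definition Dm :: "(nat \<Rightarrow> nat \<Rightarrow> complex) \<Rightarrow> (nat \<Rightarrow> complex) \<Rightarrow> nat \<Rightarrow> real" where
  "Dm R b m = Re (\<Sum>j=1..m. cnj (b (Suc m)) * R (Suc m) j * b j)"

lemma acl: "((a::complex) + b) + (c + d) = d + b + c + a"
  by (simp add: algebra_simps)

lemma step:
  assumes herm: "hermitian_mat N R" and mN: "Suc m \<le> N" and bm: "cmod (b (Suc m)) = 1"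
  shows "Fval N R (Suc m) b - Fval N R m b = acoef N R (Suc m) + 2 * Dm R b m"
proof -
  define f where "f i j = cnj (b i) * Rbar N R i j * b j" for i j
  have ins: "{1..Suc m} = insert (Suc m) {1..m}" by auto
  have S: "(\<Sum>i=1..Suc m. \<Sum>j=1..Suc m. f i j) = (\<Sum>i=1..m. \<Sum>j=1..m. f i j)
      + (\<Sum>j=1..m. f (Suc m) j) + (\<Sum>i=1..m. f i (Suc m)) + f (Suc m) (Suc m)"
    proof -
    have fin: "finite {1..m}" and nin: "Suc m \<notin> {1..m}" by auto
    have "(\<Sum>i=1..Suc m. \<Sum>j=1..Suc m. f i j) =
       (f (Suc m) (Suc m) + (\<Sum>j=1..m. f (Suc m) j)) + (\<Sum>i=1..m. f i (Suc m) + (\<Sum>j=1..m. f i j))"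
      unfolding ins sum.insert[OF fin nin] ..
    also have "\<dots> = (f (Suc m) (Suc m) + (\<Sum>j=1..m. f (Suc m) j)) + ((\<Sum>i=1..m. f i (Suc m)) + (\<Sum>i=1..m. \<Sum>j=1..m. f i j))"
      by (simp only: sum.distrib)
    also have "\<dots> = (\<Sum>i=1..m. \<Sum>j=1..m. f i j) + (\<Sum>j=1..m. f (Suc m) j) + (\<Sum>i=1..m. f i (Suc m)) + f (Suc m) (Suc m)"
      by (rule acl)
    finally show ?thesis .
  qed
  have c: "f i (Suc m) = cnj (f (Suc m) i)" if "i \<in> {1..m}" for i
  proof -
    have im: "i \<le> m" "1 \<le> i" using that by simp_all
    hence "i \<noteq> Suc m" by simp
    moreover have "R i (Suc m) = cnj (R (Suc m) i)"
    proof -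
      have "i \<in> {1..N}" "Suc m \<in> {1..N}" using im mN by auto
      thus ?thesis using herm unfolding hermitian_mat_def by blast
    qed
    ultimately show ?thesis unfolding f_def Rbar_def by simp
  qed
  have r1: "Re (\<Sum>i=1..m. f i (Suc m)) = Re (\<Sum>j=1..m. f (Suc m) j)"
    using c by (simp add: Re_sum)
  have r2: "(\<Sum>j=1..m. f (Suc m) j) = (\<Sum>j=1..m. cnj (b (Suc m)) * R (Suc m) j * b j)"
    by (rule sum.cong) (auto simp: f_def Rbar_def)
  have "cnj (b (Suc m)) * b (Suc m) = 1"
  proof -
    have "b (Suc m) * cnj (b (Suc m)) = complex_of_real ((cmod (b (Suc m)))^2)"
      by (rule complex_norm_square[symmetric])
    thus ?thesis using bm by (simp add: mult.commute)
  qed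
  hence r3: "f (Suc m) (Suc m) = acoef N R (Suc m)"
    unfolding f_def Rbar_def by (simp add: algebra_simps)
  have e1: "Fval N R (Suc m) b = Re (\<Sum>i=1..m. \<Sum>j=1..m. f i j)
      + Re (\<Sum>j=1..m. f (Suc m) j) + Re (\<Sum>i=1..m. f i (Suc m)) + Re (f (Suc m) (Suc m))"
    unfolding Fval_def f_def[symmetric] S by (simp only: plus_complex.sel)
  have e2: "Fval N R m b = Re (\<Sum>i=1..m. \<Sum>j=1..m. f i j)"
    unfolding Fval_def f_def[symmetric] ..
  have e3: "Dm R b m = Re (\<Sum>j=1..m. f (Suc m) j)"
    unfolding Dm_def r2 ..
  show ?thesis using e1 e2 e3 r1 r3 by simp
qed

lemma bnd:
  assumes b: "\<forall>i\<in>{1..Suc m}. cmod (b i) = 1"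
  shows "\<bar>Dm R b m\<bar> \<le> delta R (Suc m)"
proof -
  have "\<bar>Dm R b m\<bar> \<le> cmod (\<Sum>j=1..m. cnj (b (Suc m)) * R (Suc m) j * b j)"
    unfolding Dm_def by (rule abs_Re_le_cmod)
  also have "\<dots> \<le> (\<Sum>j=1..m. cmod (cnj (b (Suc m)) * R (Suc m) j * b j))"
    by (rule norm_sum)
  also have "\<dots> = (\<Sum>j=1..m. cmod (R (Suc m) j))"
    by (rule sum.cong) (use b in \<open>auto simp: norm_mult\<close>)
  also have "\<dots> = delta R (Suc m)"
    unfolding delta_def by (rule sum.cong) auto
  finally show ?thesis .
qed

lemma telesc:
  assumes herm: "hermitian_mat N R" and "k + d \<le> N"
    and b: "\<forall>i\<in>{1..k+d}. cmod (b i) = 1"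
  shows "Fval N R (k + d) b - Fval N R k b = (\<Sum>i=k+1..k+d. acoef N R i + 2 * Dm R b (i - 1))"
  using assms(2,3)
proof (induction d)
  case 0
  then show ?case by simp
next
  case (Suc d)
  have "Fval N R (Suc (k + d)) b - Fval N R (k+d) b = acoef N R (Suc (k+d)) + 2 * Dm R b (k+d)"
    by (rule step[OF herm]) (use Suc.prems in auto)
  moreover have "{k+1..k + Suc d} = insert (Suc (k+d)) {k+1..k+d}" by auto
  moreover have "Fval N R (k + d) b - Fval N R k b = (\<Sum>i=k+1..k+d. acoef N R i + 2 * Dm R b (i - 1))"
    using Suc by simp
  ultimately show ?case by simp
qed

theorem lemma1:
  fixes N :: nat and R :: "nat \<Rightarrow> nat \<Rightarrow> complex" and b :: "nat \<Rightarrow> complex"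
    and k l :: nat
  assumes herm: "hermitian_mat N R"
    and kl: "1 \<le> k" "k \<le> l" "l \<le> N"
    and unimod: "\<forall>i\<in>{1..l}. cmod (b i) = 1"
  shows "4 * (\<Sum>i=k+1..l. \<Sum>j=1..N-i. delta R (i + j)) \<le> Fval N R l b - Fval N R k b
       \<and> Fval N R l b - Fval N R k b
           \<le> 4 * (\<Sum>i=k+1..l. delta R i + (\<Sum>j=1..N-i. delta R (i + j)))"
proof -
  obtain d where ld: "l = k + d" using kl by (metis le_add_diff_inverse)
  have eq: "Fval N R l b - Fval N R k b = (\<Sum>i=k+1..l. acoef N R i + 2 * Dm R b (i - 1))"
    using telesc[OF herm, of k d b] kl unimod ld by simp
  have B: "\<bar>Dm R b (i - 1)\<bar> \<le> delta R i" if "i \<in> {k+1..l}" for i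
  proof -
    have "Suc (i - 1) = i" using that kl by auto
    moreover have "\<forall>j\<in>{1..Suc (i-1)}. cmod (b j) = 1" using that unimod by auto
    ultimately show ?thesis using bnd[of "i - 1" b R] by simp
  qed
  have T: "4 * (\<Sum>j=1..N-i. delta R (i + j)) \<le> acoef N R i + 2 * Dm R b (i - 1)
      \<and> acoef N R i + 2 * Dm R b (i - 1) \<le> 4 * (delta R i + (\<Sum>j=1..N-i. delta R (i + j)))"
    if "i \<in> {k+1..l}" for i
    using B[OF that] unfolding acoef_def by (simp add: abs_le_iff)
  have L: "4 * (\<Sum>i=k+1..l. \<Sum>j=1..N-i. delta R (i + j)) \<le> (\<Sum>i=k+1..l. acoef N R i + 2 * Dm R b (i - 1))"
    unfolding sum_distrib_left[where r=4 and f="\<lambda>i. (\<Sum>j=1..N-i. delta R (i + j))"]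
    by (rule sum_mono) (use T in blast)
  have U: "(\<Sum>i=k+1..l. acoef N R i + 2 * Dm R b (i - 1)) \<le> 4 * (\<Sum>i=k+1..l. delta R i + (\<Sum>j=1..N-i. delta R (i + j)))"
    unfolding sum_distrib_left[where r=4 and f="\<lambda>i. delta R i + (\<Sum>j=1..N-i. delta R (i + j))"]
    by (rule sum_mono) (use T in blast)
  show ?thesis using L U eq by linarith
qed

end
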